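(* Let $v_1,\ldots,v_r\in\mathbb{Z}^n$ with $\sum_{i=1}^r v_i=0$ and $\mathbf{a}=(a_1,\ldots,a_r)\in\mathbb{Z}^r$ be such that $P=\bigcap_{i=1}^r\{x\in\mathbb{R}^n : \langle v_i,x\rangle+a_i\ge 0\}$ is compact and each hyperplane $H_i=\{x:\langle v_i,x\rangle+a_i=0\}$ meets $P$. Then the function $\phi_{\mathbf{a}}:P\to\mathbb{R}_{>0}$, $\phi_{\mathbf{a}}(x)=\prod_{i=1}^r(\langle v_i,x\rangle+a_i)^{\langle v_i,x\rangle+a_i}$ (with $0^0=1$), is convex on $P$, and there is a unique point $m_{\mathbf{a}}$ in the relative interior of $P$ minimizing $\phi_{\mathbf{a}}$.
   Context: The relative interior of $P$ is the interior of $P$ viewed as a subset of the affine span of $P$. *)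

theory Defs
  imports "HOL-Analysis.Analysis"
begin

text \<open>Self-power t^t with the convention 0^0 = 1 (Isabelle's powr has 0 powr 0 = 0).\<close>
definition selfpow :: "real \<Rightarrow> real" where
  "selfpow t = (if t = 0 then 1 else t powr t)"

definition polyP :: "nat \<Rightarrow> (nat \<Rightarrow> real ^ 'n) \<Rightarrow> (nat \<Rightarrow> int) \<Rightarrow> (real ^ 'n) set" where
  "polyP r v a = {x. \<forall>i<r. v i \<bullet> x + of_int (a i) \<ge> 0}"

definition phiA :: "nat \<Rightarrow> (nat \<Rightarrow> real ^ 'n) \<Rightarrow> (nat \<Rightarrow> int) \<Rightarrow> real ^ 'n \<Rightarrow> real" where
  "phiA r v a x = (\<Prod>i<r. selfpow (v i \<bullet> x + of_int (a i)))"

end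

theory Submission
  imports Defs
begin


definition ff :: "real \<Rightarrow> real" where "ff t = t * ln t"

lemma ff_conv_pos: "convex_on {0<..} ff"
proof (rule convex_on_realI[where f' = "\<lambda>t. ln t + 1"])
  show "connected {0::real<..}" by simp
  fix x :: real assume "x \<in> {0<..}"
  then show "(ff has_real_derivative ln x + 1) (at x)"
    unfolding ff_def by (auto intro!: derivative_eq_intros)
next
  fix x y :: real assume "x \<in> {0<..}" "y \<in> {0<..}" "x \<le> y"
  then show "ln x + 1 \<le> ln y + 1" by simp
qed

lemma ff_conv:
  assumes "x \<ge> 0" "y \<ge> 0" "0 \<le> u" "u \<le> 1"
  shows "ff ((1-u)*x + u*y) \<le> (1-u)*ff x + u*ff y"
proof -
  have gen: "ff ((1-u)*x) \<le> (1-u)*ff x" if "x \<ge> 0" "0 \<le> u" "u \<le> 1" for x u :: real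
  proof (cases "x = 0 \<or> u = 1")
    case True then show ?thesis by (auto simp: ff_def)
  next
    case False
    then have "x > 0" "1 - u > 0" using that by auto
    then have "ln ((1-u)*x) = ln (1-u) + ln x" by (simp add: ln_mult)
    moreover have "ln (1-u) \<le> 0" using \<open>1-u>0\<close> that by simp
    have "((1-u)*x) * ln (1-u) \<le> 0"
      using \<open>x>0\<close> \<open>1-u>0\<close> \<open>ln (1-u) \<le> 0\<close> by (simp add: mult_nonneg_nonpos)
    moreover have "ff ((1-u)*x) = (1-u) * ff x + ((1-u)*x) * ln (1-u)"
      unfolding ff_def using \<open>ln ((1-u)*x) = ln (1-u) + ln x\<close> by (simp add: algebra_simps)
    ultimately show ?thesis by linarith
  qed
  show ?thesis
  proof (cases "x = 0")
    case True
    then show ?thesis using gen[of y "1-u"] assms by (simp add: ff_def)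
  next
    case x: False
    show ?thesis
    proof (cases "y = 0")
      case True
      then show ?thesis using gen[of x u] assms by (simp add: ff_def)
    next
      case False
      then show ?thesis using x assms ff_conv_pos[unfolded convex_on_def]
        by auto
    qed
  qed
qed

lemma ln_strict: "0 < (t::real) \<Longrightarrow> t \<noteq> 1 \<Longrightarrow> ln t < t - 1"
  using ln_eq_minus_one ln_le_minus_one by force

lemma ff_tangent:
  assumes "m > 0" "x \<ge> 0" "x \<noteq> m"
  shows "ff x > ff m + (ln m + 1) * (x - m)"
proof (cases "x = 0")
  case True then show ?thesis using assms by (simp add: ff_def algebra_simps)
next
  case False
  then have x: "x > 0" using assms by auto
  have "ln (m/x) < m/x - 1" using ln_strict[of "m/x"] x assms by auto
  then have "ln m - ln x < m/x - 1" using x assms by (simp add: ln_div)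
  then have "x * (ln m - ln x) < x * (m/x - 1)" using x by (simp add: mult_strict_left_mono)
  then have "x * ln m - x * ln x < m - x" using x by (simp add: algebra_simps)
  then show ?thesis unfolding ff_def by (simp add: algebra_simps)
qed

lemma ff_strict:
  assumes "x \<ge> 0" "y \<ge> 0" "x \<noteq> y"
  shows "ff ((x+y)/2) < (ff x + ff y)/2"
proof -
  let ?m = "(x+y)/2"
  have m: "?m > 0" using assms by auto
  have "ff x > ff ?m + (ln ?m + 1) * (x - ?m)" using ff_tangent[OF m, of x] assms by auto
  moreover have "ff y > ff ?m + (ln ?m + 1) * (y - ?m)" using ff_tangent[OF m, of y] assms by auto
  moreover have "(ln ?m + 1) * (x - ?m) + (ln ?m + 1) * (y - ?m) = 0" by (simp add: algebra_simps)
  ultimately have "ff x + ff y > 2 * ff ?m" by linarith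
  then show ?thesis by simp
qed

lemma ff_cont: "continuous_on {0..} ff"
proof -
  have lim: "(ff \<longlongrightarrow> 0) (at_right 0)"
    unfolding filterlim_at_right_to_top
  proof (rule Lim_transform_eventually)
    show "((\<lambda>x::real. - (ln x / x)) \<longlongrightarrow> 0) at_top"
      using tendsto_minus[OF ln_x_over_x_tendsto_0] by simp
    show "\<forall>\<^sub>F x in at_top. - (ln x / x) = ff (inverse x)"
      using eventually_gt_at_top[of "0::real"]
      by eventually_elim (simp add: ff_def ln_inverse divide_inverse)
  qed
  show ?thesis unfolding continuous_on_eq_continuous_within
  proof
    fix x :: real assume "x \<in> {0..}"
    show "continuous (at x within {0..}) ff"
    proof (cases "x = 0")
      case True
      then show ?thesis using lim unfolding continuous_within
        by (simp add: at_within_Ici_at_right ff_def)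
    next
      case False
      then have "x > 0" using \<open>x \<in> {0..}\<close> by auto
      then have "isCont ff x" unfolding ff_def by (auto intro!: continuous_intros)
      then show ?thesis using continuous_at_imp_continuous_at_within by blast
    qed
  qed
qed


definition LL :: "(nat \<Rightarrow> real ^ 'n) \<Rightarrow> (nat \<Rightarrow> int) \<Rightarrow> nat \<Rightarrow> real ^ 'n \<Rightarrow> real" where
  "LL v a i x = v i \<bullet> x + of_int (a i)"

definition GG :: "nat \<Rightarrow> (nat \<Rightarrow> real ^ 'n) \<Rightarrow> (nat \<Rightarrow> int) \<Rightarrow> real ^ 'n \<Rightarrow> real" where
  "GG r v a x = (\<Sum>i<r. ff (LL v a i x))"

lemma LL_comb: "LL v a i ((1-u) *\<^sub>R x + u *\<^sub>R y) = (1-u) * LL v a i x + u * LL v a i y"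
  unfolding LL_def by (simp add: inner_add_right algebra_simps)

lemma selfpow_ff: "t \<ge> 0 \<Longrightarrow> selfpow t = exp (ff t)"
  unfolding selfpow_def ff_def by (auto simp: powr_def)

lemma polyP_LL: "x \<in> polyP r v a \<longleftrightarrow> (\<forall>i<r. LL v a i x \<ge> 0)"
  unfolding polyP_def LL_def by auto

lemma phi_GG: "x \<in> polyP r v a \<Longrightarrow> phiA r v a x = exp (GG r v a x)"
proof -
  assume x: "x \<in> polyP r v a"
  have "phiA r v a x = (\<Prod>i<r. exp (ff (LL v a i x)))"
    unfolding phiA_def using x by (intro prod.cong) (auto simp: polyP_LL selfpow_ff LL_def)
  also have "\<dots> = exp (GG r v a x)" unfolding GG_def by (simp add: exp_sum)
  finally show ?thesis .
qed

lemma convex_polyP: "convex (polyP r v a)"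
proof (rule convexI)
  fix x y and u w :: real
  assume x: "x \<in> polyP r v a" and y: "y \<in> polyP r v a" and uw: "0 \<le> u" "0 \<le> w" "u + w = 1"
  have u: "u = 1 - w" using uw by simp
  show "u *\<^sub>R x + w *\<^sub>R y \<in> polyP r v a"
    unfolding polyP_LL
  proof (intro allI impI)
    fix i assume i: "i < r"
    have "LL v a i x \<ge> 0" "LL v a i y \<ge> 0" using x y i by (auto simp: polyP_LL)
    then have "(1 - w) * LL v a i x + w * LL v a i y \<ge> 0" using uw u by simp
    then show "0 \<le> LL v a i (u *\<^sub>R x + w *\<^sub>R y)" unfolding u LL_comb .
  qed
qed

lemma GG_convex: "convex_on (polyP r v a) (GG r v a)"
proof (rule convex_onI[OF _ convex_polyP])
  fix t :: real and x y assume t: "0 < t" "t < 1" and x: "x \<in> polyP r v a" and y: "y \<in> polyP r v a"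
  have "GG r v a ((1 - t) *\<^sub>R x + t *\<^sub>R y) = (\<Sum>i<r. ff ((1-t) * LL v a i x + t * LL v a i y))"
    unfolding GG_def LL_comb ..
  also have "\<dots> \<le> (\<Sum>i<r. (1-t) * ff (LL v a i x) + t * ff (LL v a i y))"
    using x y t by (intro sum_mono ff_conv) (auto simp: polyP_LL)
  also have "\<dots> = (1 - t) * GG r v a x + t * GG r v a y"
    unfolding GG_def by (simp add: sum.distrib sum_distrib_left)
  finally show "GG r v a ((1 - t) *\<^sub>R x + t *\<^sub>R y) \<le> (1 - t) * GG r v a x + t * GG r v a y" .
qed

lemma phi_convex: "convex_on (polyP r v a) (phiA r v a)"
proof (rule convex_onI[OF _ convex_polyP])
  fix t :: real and x y assume t: "0 < t" "t < 1" and x: "x \<in> polyP r v a" and y: "y \<in> polyP r v a"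
  have z: "(1 - t) *\<^sub>R x + t *\<^sub>R y \<in> polyP r v a"
    using convexD[OF convex_polyP x y, of "1-t" t] t by auto
  have "phiA r v a ((1 - t) *\<^sub>R x + t *\<^sub>R y) = exp (GG r v a ((1 - t) *\<^sub>R x + t *\<^sub>R y))"
    using z by (simp add: phi_GG)
  also have "\<dots> \<le> exp ((1 - t) * GG r v a x + t * GG r v a y)"
    using convex_onD[OF GG_convex[of r v a], of t x y] t x y by simp
  also have "\<dots> \<le> (1 - t) * exp (GG r v a x) + t * exp (GG r v a y)"
    using convex_onD[OF exp_convex, of t "GG r v a x" "GG r v a y"] t by simp
  also have "\<dots> = (1 - t) * phiA r v a x + t * phiA r v a y" using x y by (simp add: phi_GG)
  finally show "phiA r v a ((1 - t) *\<^sub>R x + t *\<^sub>R y) \<le> (1 - t) * phiA r v a x + t * phiA r v a y" .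
qed

lemma GG_cont: "continuous_on (polyP r v a) (GG r v a)"
  unfolding GG_def
proof (intro continuous_on_sum)
  fix i assume i: "i \<in> {..<r}"
  have "continuous_on (polyP r v a) (LL v a i)" unfolding LL_def by (intro continuous_intros)
  moreover have "LL v a i ` polyP r v a \<subseteq> {0..}" using i by (auto simp: polyP_LL)
  ultimately show "continuous_on (polyP r v a) (\<lambda>x. ff (LL v a i x))"
    using continuous_on_compose2[OF ff_cont] by blast
qed

lemma kernel_zero:
  assumes cpt: "compact (polyP r v a)" and p: "p \<in> polyP r v a"
    and w: "\<forall>i<r. v i \<bullet> w = 0"
  shows "w = 0"
proof (rule ccontr)
  assume wne: "w \<noteq> 0"
  obtain B where B: "\<forall>x\<in>polyP r v a. norm x \<le> B"
    using compact_imp_bounded[OF cpt] unfolding bounded_iff by blast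
  have pt: "p + t *\<^sub>R w \<in> polyP r v a" for t
    using p w by (auto simp: polyP_LL LL_def inner_add_right)
  define t where "t = (2*B + 1) / norm w"
  have nw: "norm w > 0" using wne by simp
  have Bp: "B \<ge> 0" using B p norm_ge_zero order_trans by blast
  have "norm (t *\<^sub>R w) = 2*B + 1" unfolding t_def using nw Bp by simp
  moreover have "norm (t *\<^sub>R w) \<le> norm (p + t *\<^sub>R w) + norm p"
    by (metis add_diff_cancel_left' norm_triangle_ineq4 add.commute)
  moreover have "norm (p + t *\<^sub>R w) \<le> B" "norm p \<le> B" using B pt[of t] p by auto
  ultimately show False by linarith
qed

lemma minimizer_face:
  assumes m: "m \<in> polyP r v a" and mmin: "\<forall>x\<in>polyP r v a. GG r v a m \<le> GG r v a x"
    and i: "i < r" and Lm: "LL v a i m = 0" and y: "y \<in> polyP r v a"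
  shows "LL v a i y = 0"
proof (rule ccontr)
  assume "LL v a i y \<noteq> 0"
  then have d: "LL v a i y > 0" using y i by (auto simp: polyP_LL)
  define d where "d = LL v a i y"
  define S where "S = (\<Sum>j\<in>{..<r}-{i}. ff (LL v a j y) - ff (LL v a j m))"
  define C where "C = d * ln d + S"
  define t where "t = exp (- (\<bar>C\<bar> + 1) / d)"
  have dpos: "d > 0" using d d_def by simp
  have t0: "t > 0" unfolding t_def by simp
  have lnt: "ln t = - (\<bar>C\<bar> + 1) / d" unfolding t_def by simp
  have t1: "t \<le> 1" unfolding t_def using dpos
    by (simp add: divide_nonpos_pos)
  define z where "z = (1 - t) *\<^sub>R m + t *\<^sub>R y"
  have z: "z \<in> polyP r v a" unfolding z_def
    using convexD[OF convex_polyP m y, of "1-t" t] t0 t1 by auto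
  have fin: "finite ({..<r} - {i})" by simp
  have split: "GG r v a x = ff (LL v a i x) + (\<Sum>j\<in>{..<r}-{i}. ff (LL v a j x))" for x
    unfolding GG_def using i by (simp add: sum.remove)
  have "(\<Sum>j\<in>{..<r}-{i}. ff (LL v a j z)) - (\<Sum>j\<in>{..<r}-{i}. ff (LL v a j m))
      = (\<Sum>j\<in>{..<r}-{i}. ff (LL v a j z) - ff (LL v a j m))" by (simp add: sum_subtractf)
  also have "\<dots> \<le> (\<Sum>j\<in>{..<r}-{i}. t * (ff (LL v a j y) - ff (LL v a j m)))"
  proof (rule sum_mono)
    fix j assume j: "j \<in> {..<r} - {i}"
    have "ff (LL v a j z) \<le> (1-t) * ff (LL v a j m) + t * ff (LL v a j y)"
      unfolding z_def LL_comb using j m y t0 t1 by (intro ff_conv) (auto simp: polyP_LL)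
    then show "ff (LL v a j z) - ff (LL v a j m) \<le> t * (ff (LL v a j y) - ff (LL v a j m))"
      by (simp add: algebra_simps)
  qed
  also have "\<dots> = t * S" unfolding S_def by (simp add: sum_distrib_left)
  finally have rest: "(\<Sum>j\<in>{..<r}-{i}. ff (LL v a j z)) - (\<Sum>j\<in>{..<r}-{i}. ff (LL v a j m)) \<le> t * S" .
  have Liz: "LL v a i z = t * d" unfolding z_def LL_comb Lm d_def by simp
  have "ff (LL v a i z) = t * d * ln t + t * (d * ln d)"
    unfolding Liz ff_def using t0 dpos by (simp add: ln_mult algebra_simps)
  moreover have "ff (LL v a i m) = 0" using Lm by (simp add: ff_def)
  ultimately have "GG r v a z - GG r v a m \<le> t * (d * ln t + C)"
    using rest split[of z] split[of m] unfolding C_def by (simp add: algebra_simps)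
  moreover have "d * ln t + C < 0"
  proof -
    have "d * ln t = - (\<bar>C\<bar> + 1)" unfolding lnt using dpos by simp
    then show ?thesis by linarith
  qed
  moreover have "t * (d * ln t + C) < 0" using t0 \<open>d * ln t + C < 0\<close> by (simp add: mult_pos_neg)
  ultimately have "GG r v a z < GG r v a m" by linarith
  then show False using mmin z by fastforce
qed

lemma minimizer_relint:
  assumes Pne: "polyP r v a \<noteq> {}" and m: "m \<in> polyP r v a"
    and mmin: "\<forall>x\<in>polyP r v a. GG r v a m \<le> GG r v a x"
  shows "m \<in> rel_interior (polyP r v a)"
  unfolding convex_rel_interior_iff[OF convex_polyP Pne]
proof
  fix x assume x: "x \<in> polyP r v a"
  define T where "T = {LL v a i m / (LL v a i x + 1) | i. i < r \<and> LL v a i m > 0}"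
  have finT: "finite T" unfolding T_def by simp
  define \<delta> where "\<delta> = Min (insert 1 T)"
  have Tpos: "\<forall>s\<in>T. s > 0" unfolding T_def using x by (auto simp: polyP_LL)
  have dpos: "\<delta> > 0" unfolding \<delta>_def using finT Tpos by simp
  have dle: "\<delta> \<le> LL v a i m / (LL v a i x + 1)" if "i < r" "LL v a i m > 0" for i
    unfolding \<delta>_def using finT that by (intro Min_le) (auto simp: T_def)
  have "(1 - (1 + \<delta>)) *\<^sub>R x + (1 + \<delta>) *\<^sub>R m \<in> polyP r v a"
    unfolding polyP_LL
  proof (intro allI impI)
    fix i assume i: "i < r"
    have Lx: "LL v a i x \<ge> 0" and Lm: "LL v a i m \<ge> 0" using x m i by (auto simp: polyP_LL)
    have eq: "LL v a i ((1 - (1 + \<delta>)) *\<^sub>R x + (1 + \<delta>) *\<^sub>R m) = LL v a i m + \<delta> * LL v a i m - \<delta> * LL v a i x"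
      unfolding LL_comb by (simp add: algebra_simps)
    show "0 \<le> LL v a i ((1 - (1 + \<delta>)) *\<^sub>R x + (1 + \<delta>) *\<^sub>R m)"
    proof (cases "LL v a i m = 0")
      case True
      then have "LL v a i x = 0" using minimizer_face[OF m mmin i True x] by simp
      then show ?thesis using eq True by simp
    next
      case False
      then have Lmp: "LL v a i m > 0" using Lm by simp
      have "\<delta> * LL v a i x \<le> (LL v a i m / (LL v a i x + 1)) * LL v a i x"
        using dle[OF i Lmp] Lx by (rule mult_right_mono)
      also have "\<dots> \<le> LL v a i m" using Lx Lmp by (simp add: field_simps)
      finally have "\<delta> * LL v a i x \<le> LL v a i m" .
      moreover have "\<delta> * LL v a i m \<ge> 0" using dpos Lm by simp
      ultimately show ?thesis using eq by linarith
    qed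
  qed
  then show "\<exists>e>1. (1 - e) *\<^sub>R x + e *\<^sub>R m \<in> polyP r v a" using dpos
    by (intro exI[of _ "1 + \<delta>"]) auto
qed

theorem mainTheorem2:
  fixes r :: nat and v :: "nat \<Rightarrow> real ^ 'n" and a :: "nat \<Rightarrow> int"
  assumes integral: "\<forall>i<r. \<forall>j. v i $ j \<in> \<int>"
    and sum0: "(\<Sum>i<r. v i) = 0"
    and cpt: "compact (polyP r v a)"
    and meets: "\<forall>i<r. \<exists>x \<in> polyP r v a. v i \<bullet> x + of_int (a i) = 0"
  shows "(\<forall>x \<in> polyP r v a. phiA r v a x > 0)
      \<and> convex_on (polyP r v a) (phiA r v a)
      \<and> (\<exists>!m. m \<in> rel_interior (polyP r v a)
              \<and> (\<forall>x \<in> polyP r v a. phiA r v a m \<le> phiA r v a x))"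
proof (intro conjI)
  show "\<forall>x \<in> polyP r v a. phiA r v a x > 0" by (simp add: phi_GG)
  show "convex_on (polyP r v a) (phiA r v a)" by (rule phi_convex)
  have r0: "r > 0"
  proof (rule ccontr)
    assume "\<not> r > 0"
    then have "polyP r v a = UNIV" by (simp add: polyP_def)
    then show False using compact_imp_bounded[OF cpt] by simp
  qed
  then obtain p where p: "p \<in> polyP r v a" using meets by blast
  then have Pne: "polyP r v a \<noteq> {}" by blast
  obtain m where m: "m \<in> polyP r v a" and mmin: "\<forall>x\<in>polyP r v a. GG r v a m \<le> GG r v a x"
    using continuous_attains_inf[OF cpt Pne GG_cont] by blast
  have iff: "(\<forall>x \<in> polyP r v a. phiA r v a q \<le> phiA r v a x) \<longleftrightarrow> (\<forall>x\<in>polyP r v a. GG r v a q \<le> GG r v a x)"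
    if q: "q \<in> polyP r v a" for q
    using q by (simp add: phi_GG)
  have relsub: "rel_interior (polyP r v a) \<subseteq> polyP r v a" by (rule rel_interior_subset)
  show "\<exists>!m. m \<in> rel_interior (polyP r v a) \<and> (\<forall>x \<in> polyP r v a. phiA r v a m \<le> phiA r v a x)"
  proof (rule ex1I[of _ m])
    show "m \<in> rel_interior (polyP r v a) \<and> (\<forall>x \<in> polyP r v a. phiA r v a m \<le> phiA r v a x)"
      using minimizer_relint[OF Pne m mmin] iff[OF m] mmin by blast
  next
    fix q assume q: "q \<in> rel_interior (polyP r v a) \<and> (\<forall>x \<in> polyP r v a. phiA r v a q \<le> phiA r v a x)"
    then have qP: "q \<in> polyP r v a" using relsub by blast
    have qmin: "\<forall>x\<in>polyP r v a. GG r v a q \<le> GG r v a x" using q iff[OF qP] by blast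
    have eqG: "GG r v a q = GG r v a m" using qmin mmin m qP by (meson order_antisym)
    show "q = m"
    proof (rule ccontr)
      assume qm: "q \<noteq> m"
      have "\<exists>i<r. v i \<bullet> (q - m) \<noteq> 0"
        using kernel_zero[OF cpt p, of "q - m"] qm by auto
      then obtain i where i: "i < r" and ne: "LL v a i q \<noteq> LL v a i m"
        by (auto simp: LL_def inner_diff_right)
      define z where "z = (1 - 1/2) *\<^sub>R q + (1/2::real) *\<^sub>R m"
      have z: "z \<in> polyP r v a" unfolding z_def
        using convexD[OF convex_polyP qP m, of "1-1/2" "1/2"] by auto
      have "GG r v a z < (\<Sum>j<r. (ff (LL v a j q) + ff (LL v a j m)) / 2)"
        unfolding GG_def
      proof (rule sum_strict_mono_ex1)
        show "finite {..<r}" by simp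
        show "\<forall>j\<in>{..<r}. ff (LL v a j z) \<le> (ff (LL v a j q) + ff (LL v a j m)) / 2"
        proof
          fix j assume j: "j \<in> {..<r}"
          have "ff (LL v a j z) \<le> (1 - 1/2) * ff (LL v a j q) + 1/2 * ff (LL v a j m)"
            unfolding z_def LL_comb using j qP m by (intro ff_conv) (auto simp: polyP_LL)
          then show "ff (LL v a j z) \<le> (ff (LL v a j q) + ff (LL v a j m)) / 2" by simp
        qed
        have "ff (LL v a i z) < (ff (LL v a i q) + ff (LL v a i m)) / 2"
        proof -
          have "LL v a i z = (LL v a i q + LL v a i m) / 2" unfolding z_def LL_comb by simp
          moreover have "ff ((LL v a i q + LL v a i m) / 2) < (ff (LL v a i q) + ff (LL v a i m)) / 2"
            using ff_strict[of "LL v a i q" "LL v a i m"] ne i qP m by (auto simp: polyP_LL)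
          ultimately show ?thesis by metis
        qed
        then show "\<exists>j\<in>{..<r}. ff (LL v a j z) < (ff (LL v a j q) + ff (LL v a j m)) / 2"
          using i by blast
      qed
      also have "\<dots> = (GG r v a q + GG r v a m) / 2"
        unfolding GG_def by (simp only: sum_divide_distrib[symmetric] sum.distrib)
      also have "\<dots> = GG r v a m" using eqG by simp
      finally show False using mmin z by fastforce
    qed
  qed
qed

end
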